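(* Consider the two-layer multi-item order fulfillment problem described in the context with a single FDC ($K=1$), time-invariant variable costs, and given fixed costs $f_0\ge0$, $f_1>0$. Then every online fulfillment policy $\mathrm{ALG}$ (deterministic or randomized) satisfies \[\mathfrak R_{\mathrm{inv}}(\mathrm{ALG})\ge\max\left\{1+\frac{f_0}{f_1},\ \frac54\right\}.\]
   Context: Problem with one FDC (index $1$) and one RDC (index $0$, unlimited inventory). The FDC initially holds $I_{1,0}^i\ge0$ units of item $i$, never replenished. In periods $t=1,\dots,T$ an order $\boldsymbol S_t=(S_t^i)_i$ of nonnegative integers arrives; the policy must immediately and irrevocably choose $m_{0,t}^i,m_{1,t}^i\ge0$ with $m_{0,t}^i+m_{1,t}^i=S_t^i$ and $m_{1,t}^i\le I_{1,t-1}^i$, $I_{1,t}^i=I_{1,0}^i-\sum_{\tau\le t}m_{1,\tau}^i$. Period cost $\sum_{k=0,1}[f_k\mathbb{I}(\sum_im_{k,t}^i>0)+\sum_ic_k^im_{k,t}^i]$; total cost is the sum. An online policy (possibly randomized) decides in period $t$ using only fixed costs, initial inventories, the variable costs and orders up to $t$. $\mathfrak R_{\mathrm{inv}}(\mathrm{ALG})$ is the supremum of $\mathrm{ALG}(I)/\mathrm{OPT}(I)$ ((expected) policy cost over offline optimal cost) over all numbers of items, horizons, initial inventories, nonnegative time-invariant variable costs $c_{k,t}^i=c_k^i$ and order sequences. *)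

theory Defs
  imports "HOL-Probability.Probability"
begin

text \<open>Single FDC (index 1) and RDC (index 0). Items are 0..n-1, periods 1..T.
  Initial FDC inventory I0 i, time-invariant variable costs c0 i, c1 i, orders S t i.
  A plan is given by m1 t i (units of item i shipped from the FDC in period t);
  the RDC ships m0 t i = S t i - m1 t i.\<close>

text \<open>A deterministic online policy: given the number of items, initial inventories,
  variable costs and the list of orders S_1,...,S_t observed so far, it returns the FDC
  shipment vector for the current period t. It does not know the horizon or future orders.
  Fixed costs are fixed parameters of the whole problem.\<close>
type_synonym policy =
  "nat \<Rightarrow> (nat \<Rightarrow> nat) \<Rightarrow> (nat \<Rightarrow> real) \<Rightarrow> (nat \<Rightarrow> real) \<Rightarrow> (nat \<Rightarrow> nat) list \<Rightarrow> (nat \<Rightarrow> nat)"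

definition alg_plan ::
  "policy \<Rightarrow> nat \<Rightarrow> (nat \<Rightarrow> nat) \<Rightarrow> (nat \<Rightarrow> real) \<Rightarrow> (nat \<Rightarrow> real)
   \<Rightarrow> (nat \<Rightarrow> nat \<Rightarrow> nat) \<Rightarrow> (nat \<Rightarrow> nat \<Rightarrow> nat)" where
  "alg_plan P n I0 c0 c1 S = (\<lambda>t. P n I0 c0 c1 (map S [1..<Suc t]))"

definition feasible_plan ::
  "nat \<Rightarrow> nat \<Rightarrow> (nat \<Rightarrow> nat) \<Rightarrow> (nat \<Rightarrow> nat \<Rightarrow> nat) \<Rightarrow> (nat \<Rightarrow> nat \<Rightarrow> nat) \<Rightarrow> bool" where
  "feasible_plan n T I0 S m1 \<longleftrightarrow>
     (\<forall>t\<in>{1..T}. \<forall>i<n. m1 t i \<le> S t i \<and> (\<Sum>\<tau>=1..t. m1 \<tau> i) \<le> I0 i)"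

definition policy_feasible :: "policy \<Rightarrow> bool" where
  "policy_feasible P \<longleftrightarrow>
     (\<forall>n T I0 c0 c1 S. feasible_plan n T I0 S (alg_plan P n I0 c0 c1 S))"

definition valid_costs :: "nat \<Rightarrow> (nat \<Rightarrow> real) \<Rightarrow> (nat \<Rightarrow> real) \<Rightarrow> bool" where
  "valid_costs n c0 c1 \<longleftrightarrow> (\<forall>i<n. 0 \<le> c0 i \<and> 0 \<le> c1 i)"

definition plan_cost ::
  "real \<Rightarrow> real \<Rightarrow> nat \<Rightarrow> nat \<Rightarrow> (nat \<Rightarrow> real) \<Rightarrow> (nat \<Rightarrow> real)
   \<Rightarrow> (nat \<Rightarrow> nat \<Rightarrow> nat) \<Rightarrow> (nat \<Rightarrow> nat \<Rightarrow> nat) \<Rightarrow> real" where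
  "plan_cost f0 f1 n T c0 c1 S m1 =
     (\<Sum>t=1..T.
        (if (\<Sum>i<n. S t i - m1 t i) > 0 then f0 else 0)
      + (\<Sum>i<n. c0 i * real (S t i - m1 t i))
      + (if (\<Sum>i<n. m1 t i) > 0 then f1 else 0)
      + (\<Sum>i<n. c1 i * real (m1 t i)))"

definition OPT ::
  "real \<Rightarrow> real \<Rightarrow> nat \<Rightarrow> nat \<Rightarrow> (nat \<Rightarrow> nat) \<Rightarrow> (nat \<Rightarrow> real) \<Rightarrow> (nat \<Rightarrow> real)
   \<Rightarrow> (nat \<Rightarrow> nat \<Rightarrow> nat) \<Rightarrow> real" where
  "OPT f0 f1 n T I0 c0 c1 S =
     Inf {plan_cost f0 f1 n T c0 c1 S m1 | m1. feasible_plan n T I0 S m1}"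

text \<open>A randomized policy: a probability space M and a deterministic policy P \<omega>
  for each outcome \<omega>. Expected cost of the policy on an instance.\<close>
definition exp_alg_cost ::
  "real \<Rightarrow> real \<Rightarrow> 'w measure \<Rightarrow> ('w \<Rightarrow> policy) \<Rightarrow> nat \<Rightarrow> nat \<Rightarrow> (nat \<Rightarrow> nat)
   \<Rightarrow> (nat \<Rightarrow> real) \<Rightarrow> (nat \<Rightarrow> real) \<Rightarrow> (nat \<Rightarrow> nat \<Rightarrow> nat) \<Rightarrow> ennreal" where
  "exp_alg_cost f0 f1 M P n T I0 c0 c1 S =
     (\<integral>\<^sup>+ \<omega>. ennreal (plan_cost f0 f1 n T c0 c1 S (alg_plan (P \<omega>) n I0 c0 c1 S)) \<partial>M)"

definition R_inv :: "real \<Rightarrow> real \<Rightarrow> 'w measure \<Rightarrow> ('w \<Rightarrow> policy) \<Rightarrow> ennreal" where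
  "R_inv f0 f1 M P =
     (SUP x \<in> {(n, T, I0, c0, c1, S). valid_costs n c0 c1 \<and> OPT f0 f1 n T I0 c0 c1 S > 0}.
        (case x of (n, T, I0, c0, c1, S) \<Rightarrow>
          exp_alg_cost f0 f1 M P n T I0 c0 c1 S / ennreal (OPT f0 f1 n T I0 c0 c1 S)))"

end

theory Submission
  imports Defs
begin

definition pc :: "real \<Rightarrow> real \<Rightarrow> nat \<Rightarrow> (nat \<Rightarrow> real) \<Rightarrow> (nat \<Rightarrow> real)
   \<Rightarrow> (nat \<Rightarrow> nat \<Rightarrow> nat) \<Rightarrow> (nat \<Rightarrow> nat \<Rightarrow> nat) \<Rightarrow> nat \<Rightarrow> real" where
  "pc f0 f1 n c0 c1 S m1 t =
        (if (\<Sum>i<n. S t i - m1 t i) > 0 then f0 else 0)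
      + (\<Sum>i<n. c0 i * real (S t i - m1 t i))
      + (if (\<Sum>i<n. m1 t i) > 0 then f1 else 0)
      + (\<Sum>i<n. c1 i * real (m1 t i))"

lemma plan_cost_pc: "plan_cost f0 f1 n T c0 c1 S m1 = (\<Sum>t=1..T. pc f0 f1 n c0 c1 S m1 t)"
  by (simp add: plan_cost_def pc_def)

lemma pc_nonneg:
  assumes "0 \<le> f0" "0 \<le> f1" "valid_costs n c0 c1"
  shows "0 \<le> pc f0 f1 n c0 c1 S m1 t"
  using assms unfolding pc_def valid_costs_def
  by (intro add_nonneg_nonneg sum_nonneg mult_nonneg_nonneg) auto

definition iS :: "nat \<Rightarrow> nat \<Rightarrow> nat \<Rightarrow> nat" where
  "iS K t i = (if t \<le> 1 then (if i = 0 then K else 0) else 1)"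
definition ic0 :: "nat \<Rightarrow> real \<Rightarrow> real \<Rightarrow> nat \<Rightarrow> real" where
  "ic0 K G f1 i = (if i = 0 then G / real K else f1)"
definition c1f :: "nat \<Rightarrow> real \<Rightarrow> real \<Rightarrow> real \<Rightarrow> nat \<Rightarrow> real" where
  "c1f K G f0 f1 d = (if d < K then f0 else 0) + G / real K * (real K - real d) + (if 0 < d then f1 else 0)"

lemma pc1:
  assumes "m 1 0 \<le> K" "m 1 1 = 0"
  shows "pc f0 f1 2 (ic0 K G f1) (\<lambda>_. 0) (iS K) m 1 = c1f K G f0 f1 (m 1 0)"
  using assms by (simp add: pc_def c1f_def iS_def ic0_def numeral_2_eq_2 of_nat_diff)

lemma pct:
  assumes "2 \<le> t" "m t 0 \<le> 1" "m t 1 \<le> 1" "0 \<le> f0" "0 < f1" "0 \<le> G"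
  shows "pc f0 f1 2 (ic0 K G f1) (\<lambda>_. 0) (iS K) m t \<ge> f1 + (f0 + G / real K) * (1 - real (m t 0))"
proof -
  have "m t 0 = 0 \<or> m t 0 = 1" "m t 1 = 0 \<or> m t 1 = 1" using assms by auto
  moreover have "0 \<le> G / real K" using assms by simp
  ultimately show ?thesis using assms
    by (elim disjE) (simp_all add: pc_def iS_def ic0_def numeral_2_eq_2)
qed

lemma valid_ic0: "0 \<le> G \<Longrightarrow> 0 \<le> f1 \<Longrightarrow> valid_costs n (ic0 K G f1) (\<lambda>_. 0)"
  by (simp add: valid_costs_def ic0_def)

lemma feas_t:
  assumes "feasible_plan 2 T I0 S m" "1 \<le> t" "t \<le> T" "i < 2"
  shows "m t i \<le> S t i" "(\<Sum>\<tau>=1..t. m \<tau> i) \<le> I0 i"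
  using assms unfolding feasible_plan_def by auto

lemma feas1:
  assumes "feasible_plan 2 T (\<lambda>_. K) (iS K) m" "1 \<le> T"
  shows "m 1 0 \<le> K" "m 1 1 = 0"
  using feas_t[OF assms(1), of 1 0] feas_t[OF assms(1), of 1 1] assms(2)
  by (auto simp: iS_def)

lemma plan_ge_pc1:
  assumes "0 \<le> f0" "0 \<le> f1" "valid_costs n c0 c1" "1 \<le> T"
  shows "pc f0 f1 n c0 c1 S m 1 \<le> plan_cost f0 f1 n T c0 c1 S m"
  unfolding plan_cost_pc
  by (rule member_le_sum) (use assms pc_nonneg in auto)

lemma c1f_min:
  assumes "d \<le> K" "1 \<le> K" "0 \<le> G" "0 \<le> f0" "0 < f1"
  shows "min f1 (f0 + G) \<le> c1f K G f0 f1 d"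
proof (cases "d = 0")
  case True then show ?thesis using assms by (simp add: c1f_def)
next
  case False
  have "0 \<le> G / real K * (real K - real d)" using assms by (simp)
  moreover have "0 \<le> (if d < K then f0 else 0)" using assms by simp
  moreover have "min f1 (f0 + G) \<le> f1" by simp
  ultimately show ?thesis using False unfolding c1f_def by simp
qed

lemma alg1:
  assumes "feasible_plan 2 T (\<lambda>_. K) (iS K) m" "1 \<le> T"
  shows "plan_cost f0 f1 2 1 (ic0 K G f1) (\<lambda>_. 0) (iS K) m = c1f K G f0 f1 (m 1 0)"
  using pc1[where m=m and K=K, OF feas1[OF assms]] by (simp add: plan_cost_pc)

lemma alg2:
  assumes "feasible_plan 2 (Suc K) (\<lambda>_. K) (iS K) m" "0 \<le> f0" "0 < f1" "0 \<le> G"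
  shows "c1f K G f0 f1 (m 1 0) + real K * f1 + (f0 + G / real K) * real (m 1 0)
     \<le> plan_cost f0 f1 2 (Suc K) (ic0 K G f1) (\<lambda>_. 0) (iS K) m"
proof -
  let ?g = "f0 + G / real K"
  let ?p = "pc f0 f1 2 (ic0 K G f1) (\<lambda>_. 0) (iS K) m"
  have d: "m 1 0 \<le> K" "m 1 1 = 0" using feas1[OF assms(1)] by auto
  have tot: "(\<Sum>\<tau>=1..Suc K. m \<tau> 0) \<le> K"
    using feas_t(2)[OF assms(1), of "Suc K" 0] by simp
  have split: "(\<Sum>\<tau>=1..Suc K. m \<tau> 0) = m 1 0 + (\<Sum>\<tau>=2..Suc K. m \<tau> 0)"
    by (subst sum.atLeast_Suc_atMost) (auto simp: numeral_2_eq_2)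
  have e: "real (\<Sum>\<tau>=2..Suc K. m \<tau> 0) \<le> real K - real (m 1 0)"
    using tot split by linarith
  have le1: "m t 0 \<le> 1" "m t 1 \<le> 1" if "t \<in> {2..Suc K}" for t
    using feas_t(1)[OF assms(1), of t 0] feas_t(1)[OF assms(1), of t 1] that
    by (auto simp: iS_def)
  have "(\<Sum>t=2..Suc K. f1 + ?g * (1 - real (m t 0))) \<le> (\<Sum>t=2..Suc K. ?p t)"
    by (rule sum_mono, rule pct) (use le1 assms in auto)
  moreover have "(\<Sum>t=2..Suc K. f1 + ?g * (1 - real (m t 0)))
      = real K * f1 + ?g * (real K - real (\<Sum>\<tau>=2..Suc K. m \<tau> 0))"
    by (simp add: sum.distrib sum_subtractf sum_distrib_left[symmetric] right_diff_distrib)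
  moreover have "?g * real (m 1 0) \<le> ?g * (real K - real (\<Sum>\<tau>=2..Suc K. m \<tau> 0))"
    using e assms by (intro mult_left_mono) auto
  moreover have "plan_cost f0 f1 2 (Suc K) (ic0 K G f1) (\<lambda>_. 0) (iS K) m = ?p 1 + (\<Sum>t=2..Suc K. ?p t)"
    unfolding plan_cost_pc by (subst sum.atLeast_Suc_atMost) (auto simp: numeral_2_eq_2)
  moreover have "?p 1 = c1f K G f0 f1 (m 1 0)" using pc1[where m=m and K=K, OF d] .
  ultimately show ?thesis by linarith
qed

lemma opt_le:
  assumes "feasible_plan n T I0 S m" "0 \<le> f0" "0 \<le> f1" "valid_costs n c0 c1"
  shows "OPT f0 f1 n T I0 c0 c1 S \<le> plan_cost f0 f1 n T c0 c1 S m"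
  unfolding OPT_def
proof (rule cInf_lower)
  show "bdd_below {plan_cost f0 f1 n T c0 c1 S m1 |m1. feasible_plan n T I0 S m1}"
    by (rule bdd_belowI[of _ 0]) (auto simp: plan_cost_pc intro!: sum_nonneg pc_nonneg assms)
qed (use assms in auto)

lemma opt_pos:
  assumes "1 \<le> K" "1 \<le> T" "0 \<le> G" "0 \<le> f0" "0 < f1"
  shows "min f1 (f0 + G) \<le> OPT f0 f1 2 T (\<lambda>_. K) (ic0 K G f1) (\<lambda>_. 0) (iS K)"
  unfolding OPT_def
proof (rule cInf_greatest)
  have "feasible_plan 2 T (\<lambda>_. K) (iS K) (\<lambda>_ _. 0)" by (simp add: feasible_plan_def)
  then show "{plan_cost f0 f1 2 T (ic0 K G f1) (\<lambda>_. 0) (iS K) m1 |m1.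
        feasible_plan 2 T (\<lambda>_. K) (iS K) m1} \<noteq> {}" by blast
next
  fix x assume "x \<in> {plan_cost f0 f1 2 T (ic0 K G f1) (\<lambda>_. 0) (iS K) m1 |m1.
        feasible_plan 2 T (\<lambda>_. K) (iS K) m1}"
  then obtain m where m: "feasible_plan 2 T (\<lambda>_. K) (iS K) m"
    and x: "x = plan_cost f0 f1 2 T (ic0 K G f1) (\<lambda>_. 0) (iS K) m" by blast
  have v: "valid_costs 2 (ic0 K G f1) (\<lambda>_. 0)" using assms by (simp add: valid_ic0)
  have "min f1 (f0 + G) \<le> c1f K G f0 f1 (m 1 0)"
    using c1f_min feas1[OF m assms(2)] assms by auto
  also have "\<dots> = pc f0 f1 2 (ic0 K G f1) (\<lambda>_. 0) (iS K) m 1"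
    using pc1[where m=m and K=K, OF feas1[OF m assms(2)]] by simp
  also have "\<dots> \<le> x" unfolding x by (rule plan_ge_pc1) (use assms v in auto)
  finally show "min f1 (f0 + G) \<le> x" .
qed

lemma opt1:
  assumes "1 \<le> K" "0 \<le> G" "0 \<le> f0" "0 < f1"
  shows "OPT f0 f1 2 1 (\<lambda>_. K) (ic0 K G f1) (\<lambda>_. 0) (iS K) \<le> f1"
proof -
  have f: "feasible_plan 2 1 (\<lambda>_. K) (iS K) (iS K)"
    by (auto simp: feasible_plan_def iS_def)
  have "plan_cost f0 f1 2 1 (ic0 K G f1) (\<lambda>_. 0) (iS K) (iS K) = f1"
    using assms by (simp add: plan_cost_pc pc_def iS_def numeral_2_eq_2)
  then show ?thesis using opt_le[OF f] assms valid_ic0 by (metis less_imp_le)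
qed

lemma opt2:
  assumes "1 \<le> K" "0 \<le> G" "0 \<le> f0" "0 < f1"
  shows "OPT f0 f1 2 (Suc K) (\<lambda>_. K) (ic0 K G f1) (\<lambda>_. 0) (iS K) \<le> f0 + G + real K * f1"
proof -
  define ms where "ms = (\<lambda>t i. if t \<le> 1 then 0 else iS K t i)"
  have sm: "(\<Sum>\<tau>=1..t. ms \<tau> i) = t - 1" if "1 \<le> t" for t i
  proof -
    have "(\<Sum>\<tau>=1..t. ms \<tau> i) = ms 1 i + (\<Sum>\<tau>=Suc 1..t. ms \<tau> i)"
      using that by (subst sum.atLeast_Suc_atMost) auto
    also have "\<dots> = (\<Sum>\<tau>=Suc 1..t. 1)"
      by (auto simp: ms_def iS_def intro!: sum.cong)
    finally show ?thesis by simp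
  qed
  have f: "feasible_plan 2 (Suc K) (\<lambda>_. K) (iS K) ms"
    unfolding feasible_plan_def using sm by (auto simp: ms_def iS_def)
  have p1: "pc f0 f1 2 (ic0 K G f1) (\<lambda>_. 0) (iS K) ms 1 = f0 + G"
    using assms by (simp add: pc_def ms_def iS_def ic0_def numeral_2_eq_2)
  have pt: "pc f0 f1 2 (ic0 K G f1) (\<lambda>_. 0) (iS K) ms t = f1" if "t \<in> {2..Suc K}" for t
    using assms that by (simp add: pc_def ms_def iS_def ic0_def numeral_2_eq_2)
  have "plan_cost f0 f1 2 (Suc K) (ic0 K G f1) (\<lambda>_. 0) (iS K) ms
     = pc f0 f1 2 (ic0 K G f1) (\<lambda>_. 0) (iS K) ms 1 + (\<Sum>t=2..Suc K. pc f0 f1 2 (ic0 K G f1) (\<lambda>_. 0) (iS K) ms t)"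
    unfolding plan_cost_pc by (subst sum.atLeast_Suc_atMost) (auto simp: numeral_2_eq_2)
  also have "\<dots> = f0 + G + real K * f1" using p1 pt by simp
  finally show ?thesis using opt_le[OF f] assms valid_ic0 by (metis less_imp_le)
qed

lemma ediv: fixes E R :: ennreal and q :: real
  assumes "E / ennreal q \<le> R" "0 < q" shows "E \<le> R * ennreal q"
proof -
  have "E = E * (ennreal q / ennreal q)" using assms by simp
  also have "\<dots> = E / ennreal q * ennreal q" by (simp add: ennreal_divide_times)
  also have "\<dots> \<le> R * ennreal q" using assms(1) by (rule mult_right_mono) simp
  finally show ?thesis .
qed

lemma key:
  fixes f0 f1 :: real and M :: "'w measure" and P :: "'w \<Rightarrow> policy"
  assumes f0: "0 \<le> f0" and f1: "0 < f1"
    and ps: "prob_space M"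
    and feas: "\<forall>\<omega>\<in>space M. policy_feasible (P \<omega>)"
    and meas: "\<forall>n T I0 c0 c1 S.
           (\<lambda>\<omega>. plan_cost f0 f1 n T c0 c1 S (alg_plan (P \<omega>) n I0 c0 c1 S)) \<in> borel_measurable M"
    and K: "1 \<le> K" and G: "0 \<le> G" "0 < f0 + G" and A: "0 \<le> A"
    and hyp: "\<And>d. d \<le> K \<Longrightarrow> c \<le> A * c1f K G f0 f1 d + (c1f K G f0 f1 d + real K * f1 + (f0 + G / real K) * real d)"
  shows "ennreal c \<le> R_inv f0 f1 M P * ennreal (A * f1 + (f0 + G + real K * f1))"
proof -
  define I0 :: "nat \<Rightarrow> nat" where "I0 = (\<lambda>_. K)"
  define c0 where "c0 = ic0 K G f1"
  define c1 :: "nat \<Rightarrow> real" where "c1 = (\<lambda>_. 0)"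
  define S where "S = iS K"
  define R where "R = R_inv f0 f1 M P"
  define cost where "cost T \<omega> = plan_cost f0 f1 2 T c0 c1 S (alg_plan (P \<omega>) 2 I0 c0 c1 S)" for T \<omega>
  have v: "valid_costs 2 c0 c1" unfolding c0_def c1_def using G f1 by (simp add: valid_ic0)
  have mpos: "0 < min f1 (f0 + G)" using f1 G by simp
  have RE: "exp_alg_cost f0 f1 M P 2 T I0 c0 c1 S \<le> R * ennreal (OPT f0 f1 2 T I0 c0 c1 S)"
    if T: "1 \<le> T" for T
  proof -
    have op: "0 < OPT f0 f1 2 T I0 c0 c1 S"
      using opt_pos[OF K T G(1) f0 f1] mpos unfolding I0_def c0_def c1_def S_def by linarith
    have mem: "(2, T, I0, c0, c1, S) \<in> {(n, T, I0, c0, c1, S). valid_costs n c0 c1 \<and> OPT f0 f1 n T I0 c0 c1 S > 0}"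
      using v op by simp
    have "exp_alg_cost f0 f1 M P 2 T I0 c0 c1 S / ennreal (OPT f0 f1 2 T I0 c0 c1 S) \<le> R"
      unfolding R_def R_inv_def
      by (rule SUP_upper2[OF mem]) simp
    then show ?thesis using op by (rule ediv)
  qed
  have E1: "exp_alg_cost f0 f1 M P 2 1 I0 c0 c1 S \<le> R * ennreal f1"
  proof -
    have "R * ennreal (OPT f0 f1 2 1 I0 c0 c1 S) \<le> R * ennreal f1"
      using opt1[OF K G(1) f0 f1] unfolding I0_def c0_def c1_def S_def
      by (intro mult_left_mono ennreal_leI) simp_all
    moreover have "exp_alg_cost f0 f1 M P 2 1 I0 c0 c1 S \<le> R * ennreal (OPT f0 f1 2 1 I0 c0 c1 S)"
      by (rule RE) simp
    ultimately show ?thesis by (rule order_trans[rotated])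
  qed
  have E2: "exp_alg_cost f0 f1 M P 2 (Suc K) I0 c0 c1 S \<le> R * ennreal (f0 + G + real K * f1)"
  proof -
    have "R * ennreal (OPT f0 f1 2 (Suc K) I0 c0 c1 S) \<le> R * ennreal (f0 + G + real K * f1)"
      using opt2[OF K G(1) f0 f1] unfolding I0_def c0_def c1_def S_def
      by (intro mult_left_mono ennreal_leI) simp_all
    moreover have "exp_alg_cost f0 f1 M P 2 (Suc K) I0 c0 c1 S \<le> R * ennreal (OPT f0 f1 2 (Suc K) I0 c0 c1 S)"
      by (rule RE) simp
    ultimately show ?thesis by (rule order_trans[rotated])
  qed
  have mc: "(\<lambda>\<omega>. ennreal (cost T \<omega>)) \<in> borel_measurable M" for T
    using measurable_compose[OF meas[rule_format] measurable_ennreal] unfolding cost_def by (simp add: comp_def)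
  have pw: "ennreal c \<le> ennreal A * ennreal (cost 1 \<omega>) + ennreal (cost (Suc K) \<omega>)"
    if "\<omega> \<in> space M" for \<omega>
  proof -
    define m where "m = alg_plan (P \<omega>) 2 I0 c0 c1 S"
    have fp: "feasible_plan 2 (Suc K) (\<lambda>_. K) (iS K) m"
      using feas that unfolding policy_feasible_def m_def I0_def S_def by blast
    have d: "m 1 0 \<le> K" using feas1[OF fp] by simp
    have "cost 1 \<omega> = plan_cost f0 f1 2 1 c0 c1 S m" by (simp add: cost_def m_def)
    also have "\<dots> = c1f K G f0 f1 (m 1 0)"
      unfolding c0_def c1_def S_def by (rule alg1[OF fp]) simp
    finally have c1e: "cost 1 \<omega> = c1f K G f0 f1 (m 1 0)" .
    have "cost (Suc K) \<omega> = plan_cost f0 f1 2 (Suc K) c0 c1 S m" by (simp add: cost_def m_def)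
    moreover have "c1f K G f0 f1 (m 1 0) + real K * f1 + (f0 + G / real K) * real (m 1 0) \<le> plan_cost f0 f1 2 (Suc K) c0 c1 S m"
      unfolding c0_def c1_def S_def by (rule alg2[OF fp f0 f1 G(1)])
    ultimately have c2e: "c1f K G f0 f1 (m 1 0) + real K * f1 + (f0 + G / real K) * real (m 1 0) \<le> cost (Suc K) \<omega>"
      by simp
    have n1: "0 \<le> cost 1 \<omega>" "0 \<le> cost (Suc K) \<omega>"
      unfolding cost_def plan_cost_pc using f0 f1 v by (intro sum_nonneg pc_nonneg; simp)+
    have "c \<le> A * cost 1 \<omega> + cost (Suc K) \<omega>"
      using hyp[OF d] c2e unfolding c1e by linarith
    then have "ennreal c \<le> ennreal (A * cost 1 \<omega> + cost (Suc K) \<omega>)" by (rule ennreal_leI)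
    also have "\<dots> = ennreal A * ennreal (cost 1 \<omega>) + ennreal (cost (Suc K) \<omega>)"
      using n1 A by (simp add: ennreal_plus ennreal_mult)
    finally show ?thesis .
  qed
  have "ennreal c = (\<integral>\<^sup>+ \<omega>. ennreal c \<partial>M)"
    using prob_space.emeasure_space_1[OF ps] by simp
  also have "\<dots> \<le> (\<integral>\<^sup>+ \<omega>. ennreal A * ennreal (cost 1 \<omega>) + ennreal (cost (Suc K) \<omega>) \<partial>M)"
    by (rule nn_integral_mono) (rule pw)
  also have "\<dots> = ennreal A * exp_alg_cost f0 f1 M P 2 1 I0 c0 c1 S + exp_alg_cost f0 f1 M P 2 (Suc K) I0 c0 c1 S"
    unfolding exp_alg_cost_def cost_def[symmetric]
    using mc by (simp add: nn_integral_add nn_integral_cmult)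
  also have "\<dots> \<le> ennreal A * (R * ennreal f1) + R * ennreal (f0 + G + real K * f1)"
    using E1 E2 by (intro add_mono mult_left_mono) auto
  also have "\<dots> = R * ennreal (A * f1 + (f0 + G + real K * f1))"
    using A f1 f0 G by (simp add: ennreal_plus ennreal_mult distrib_left mult_ac)
  finally show ?thesis unfolding R_def .
qed

lemma c1f_lb:
  assumes "d \<le> K" "1 \<le> K" "0 \<le> G" "0 \<le> f0" "0 < f1"
  shows "f1 + (f0 + G - f1) * ((real K - real d) / real K) \<le> c1f K G f0 f1 d"
proof -
  have K0: "0 < real K" using assms by simp
  define u where "u = (real K - real d) / real K"
  have u0: "0 \<le> u" "u \<le> 1" using assms K0 by (auto simp: u_def field_simps)
  have "G / real K * (real K - real d) = G * u" by (simp add: u_def)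
  show ?thesis
  proof (cases "d = 0")
    case True then show ?thesis using K0 by (simp add: c1f_def)
  next
    case False
    show ?thesis
    proof (cases "d = K")
      case True then show ?thesis using False by (simp add: c1f_def)
    next
      case False2: False
      have "(f0 - f1) * u \<le> f0 * u" using assms u0 by (intro mult_right_mono) auto
      also have "\<dots> \<le> f0" using assms u0 by (simp add: mult_left_le)
      finally have "(f0 - f1) * u \<le> f0" .
      moreover have "c1f K G f0 f1 d = f0 + G * u + f1"
        using False False2 assms by (simp add: c1f_def u_def)
      ultimately show ?thesis unfolding u_def[symmetric] by (simp add: algebra_simps)
    qed
  qed
qed

theorem theorem9:
  fixes f0 f1 :: real and M :: "'w measure" and P :: "'w \<Rightarrow> policy"
  assumes "0 \<le> f0" and "0 < f1"
    and "prob_space M"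
    and "\<forall>\<omega>\<in>space M. policy_feasible (P \<omega>)"
    and "\<forall>n T I0 c0 c1 S.
           (\<lambda>\<omega>. plan_cost f0 f1 n T c0 c1 S (alg_plan (P \<omega>) n I0 c0 c1 S)) \<in> borel_measurable M"
  shows "R_inv f0 f1 M P \<ge> ennreal (max (1 + f0 / f1) (5 / 4))"
proof -
  note K = key[OF assms]
  define R where "R = R_inv f0 f1 M P"
  show ?thesis
  proof (cases "4 * f0 < f1")
    case True
    have mx: "max (1 + f0 / f1) (5 / 4) = 5 / 4"
      using True assms(2) by (simp add: max_def field_simps)
    have hyp: "5 * f1 \<le> 1 * c1f 1 (2 * f1 - f0) f0 f1 d + (c1f 1 (2 * f1 - f0) f0 f1 d + real 1 * f1 + (f0 + (2 * f1 - f0) / real 1) * real d)"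
      if "d \<le> 1" for d
    proof -
      have "d = 0 \<or> d = 1" using that by auto
      then show ?thesis by (elim disjE) (simp_all add: c1f_def)
    qed
    have "ennreal (5 * f1) \<le> R * ennreal (1 * f1 + (f0 + (2 * f1 - f0) + real 1 * f1))"
      unfolding R_def
      by (rule K[of 1 "2 * f1 - f0" 1 "5 * f1"]) (use True assms(2) hyp in auto)
    then have E: "ennreal (5 * f1) \<le> R * ennreal (4 * f1)" by simp
    show ?thesis
    proof (cases "R = top")
      case True then show ?thesis unfolding R_def by simp
    next
      case False
      then obtain r where r: "R = ennreal r" "0 \<le> r" by (cases R) auto
      have "ennreal (5 * f1) \<le> ennreal (r * (4 * f1))"
        using E r assms(2) by (simp add: ennreal_mult)
      then have "5 * f1 \<le> r * (4 * f1)" using r assms(2) by (simp add: ennreal_le_iff)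
      then have "5 / 4 \<le> r" using assms(2) by (simp add: field_simps)
      then show ?thesis unfolding mx R_def[symmetric] r by (simp add: ennreal_leI)
    qed
  next
    case False
    define F where "F = f0 / f1"
    have f0F: "f0 = F * f1" using assms(2) by (simp add: F_def)
    have F4: "1 / 4 \<le> F" using False assms(2) by (simp add: F_def field_simps)
    have mx: "max (1 + f0 / f1) (5 / 4) = 1 + F"
      using F4 by (simp add: F_def max_def)
    show ?thesis
    proof (rule ccontr)
      assume "\<not> ?thesis"
      then have lt: "R < ennreal (1 + F)" unfolding mx R_def by simp
      then obtain r where r: "R = ennreal r" "0 \<le> r" by (cases R) auto
      have rlt: "r < 1 + F"
      proof (rule ccontr)
        assume "\<not> r < 1 + F"
        then have le: "ennreal (1 + F) \<le> ennreal r" by (intro ennreal_leI) simp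
        show False using lt le unfolding r(1) by (meson leD)
      qed
      obtain h :: nat where h: "max 4 (max F ((r * (F + 1) - F) / (F + 1 - r))) < real h"
        using reals_Archimedean2 by blast
      have h4: "4 \<le> real h" and hF: "F \<le> real h"
        and hr: "(r * (F + 1) - F) / (F + 1 - r) < real h" using h by auto
      have hr2: "r * (F + 1) - F < real h * (F + 1 - r)"
        using hr rlt by (simp add: field_simps)
      define K where "K = h * h"
      define G where "G = (real h + 1 - F) * f1"
      define A where "A = real h * F - 1"
      define c where "c = real h * F * f1 + real K * (f0 + f1)"
      have K1: "1 \<le> K" using h4 by (simp add: K_def)
      have RK: "real K = real h * real h" by (simp add: K_def)
      have G0: "0 \<le> G" "0 < f0 + G" using hF assms by (auto simp: G_def intro!: add_nonneg_pos)
      have "4 * (1 / 4) \<le> real h * F" using h4 F4 by (intro mult_mono) auto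
      then have A0: "0 \<le> A" unfolding A_def by simp
      have hyp: "c \<le> A * c1f K G f0 f1 d + (c1f K G f0 f1 d + real K * f1 + (f0 + G / real K) * real d)"
        if d: "d \<le> K" for d
      proof -
        have lb: "f1 + (f0 + G - f1) * ((real K - real d) / real K) \<le> c1f K G f0 f1 d"
          by (rule c1f_lb[OF d K1 G0(1) assms(1,2)])
        have H: "f0 + G - f1 = real h * f1" by (simp add: G_def f0F algebra_simps)
        have hpos: "0 < real h" using h4 by simp
        have eq: "(real h * F) * (f1 + (real h * f1) * ((real K - real d) / real K))
            = real h * F * f1 + f0 * (real K - real d)"
          using hpos unfolding RK f0F by (simp add: field_simps)
        have "(real h * F) * (f1 + (f0 + G - f1) * ((real K - real d) / real K))
             \<le> (real h * F) * c1f K G f0 f1 d"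
          using lb hpos F4 by (intro mult_left_mono) auto
        then have m1: "real h * F * f1 + f0 * (real K - real d) \<le> (real h * F) * c1f K G f0 f1 d"
          using eq H by simp
        have "0 \<le> G / real K * real d" using G0 by simp
        then have "c \<le> (real h * F) * c1f K G f0 f1 d + real K * f1 + (f0 + G / real K) * real d"
          using m1 unfolding c_def by (simp add: algebra_simps)
        then show ?thesis unfolding A_def by (simp add: algebra_simps)
      qed
      have "ennreal c \<le> R * ennreal (A * f1 + (f0 + G + real K * f1))"
        unfolding R_def by (rule K[OF K1 G0 A0 hyp])
      moreover have "0 \<le> A * f1 + (f0 + G + real K * f1)"
        using A0 G0 assms by (intro add_nonneg_nonneg mult_nonneg_nonneg) auto
      ultimately have "c \<le> r * (A * f1 + (f0 + G + real K * f1))"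
        using r by (simp add: ennreal_mult[symmetric] ennreal_le_iff mult_nonneg_nonneg)
      then have "real h * (F + real h * (F + 1)) * f1 \<le> real h * (r * (F + 1 + real h)) * f1"
        unfolding c_def A_def G_def RK f0F by (simp add: algebra_simps)
      then have "F + real h * (F + 1) \<le> r * (F + 1 + real h)"
        using h4 assms(2) by (simp add: mult_le_cancel_right mult_le_cancel_left)
      then show False using hr2 by (simp add: algebra_simps)
    qed
  qed
qed

end
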